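(* Let $P$ be a finite poset. Then $A(S_N(P))=\emptyset$.
   Context: For a poset $P$, $x\prec y$ means $x<y$ with no $z$ satisfying $x<z<y$; $\mathrm{Diag}(P)$ is the set of covering pairs $(x,y)$, and $\mathrm{Inc}(P)$ the set of pairs of incomparable elements. Four elements $a,b,c,d$ form an $N$ in $P$ if $b\prec c$, $a\prec c$, $b\prec d$ and $(a,d)\in\mathrm{Inc}(P)$; $(b,c)$ is the diagonal edge of this $N$. $N_{diag}(P)$ is the set of diagonal edges of all $N$'s in $P$. $S_N(P)$ is the poset obtained from $P$ by adding one new (dummy) vertex $u$ on each edge $(b,c)\in N_{diag}(P)$ (so that $b\prec u\prec c$), with the induced order. For a poset $Q$, $A(Q)$ is the set of pairs $(b,c)\in\mathrm{Diag}(Q)\setminus N_{diag}(Q)$ for which there exist $a,d\in Q$ with $a<c$, $b<d$, $(a,b),(c,d)\in\mathrm{Inc}(Q)$, and either $(a,c)\in N_{diag}(Q)$ or $(b,d)\in N_{diag}(Q)$. *)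

theory Defs
  imports Main
begin

definition poset :: "'a set \<Rightarrow> ('a \<Rightarrow> 'a \<Rightarrow> bool) \<Rightarrow> bool" where
  "poset V le \<longleftrightarrow> (\<forall>x\<in>V. le x x)
     \<and> (\<forall>x\<in>V. \<forall>y\<in>V. le x y \<and> le y x \<longrightarrow> x = y)
     \<and> (\<forall>x\<in>V. \<forall>y\<in>V. \<forall>z\<in>V. le x y \<and> le y z \<longrightarrow> le x z)"

definition pless :: "('a \<Rightarrow> 'a \<Rightarrow> bool) \<Rightarrow> 'a \<Rightarrow> 'a \<Rightarrow> bool" where
  "pless le x y \<longleftrightarrow> le x y \<and> x \<noteq> y"

definition covers :: "'a set \<Rightarrow> ('a \<Rightarrow> 'a \<Rightarrow> bool) \<Rightarrow> 'a \<Rightarrow> 'a \<Rightarrow> bool" where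
  "covers V le x y \<longleftrightarrow> x \<in> V \<and> y \<in> V \<and> pless le x y
     \<and> \<not> (\<exists>z\<in>V. pless le x z \<and> pless le z y)"

definition Diag :: "'a set \<Rightarrow> ('a \<Rightarrow> 'a \<Rightarrow> bool) \<Rightarrow> ('a \<times> 'a) set" where
  "Diag V le = {(x, y). covers V le x y}"

definition Inc :: "'a set \<Rightarrow> ('a \<Rightarrow> 'a \<Rightarrow> bool) \<Rightarrow> ('a \<times> 'a) set" where
  "Inc V le = {(x, y). x \<in> V \<and> y \<in> V \<and> \<not> le x y \<and> \<not> le y x}"

definition is_N :: "'a set \<Rightarrow> ('a \<Rightarrow> 'a \<Rightarrow> bool) \<Rightarrow> 'a \<Rightarrow> 'a \<Rightarrow> 'a \<Rightarrow> 'a \<Rightarrow> bool" where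
  "is_N V le a b c d \<longleftrightarrow> covers V le b c \<and> covers V le a c \<and> covers V le b d
     \<and> (a, d) \<in> Inc V le"

definition Ndiag :: "'a set \<Rightarrow> ('a \<Rightarrow> 'a \<Rightarrow> bool) \<Rightarrow> ('a \<times> 'a) set" where
  "Ndiag V le = {(b, c). \<exists>a d. is_N V le a b c d}"

text \<open>S_N(P): vertices are the old ones (Inl p) and one dummy vertex Inr (b,c) per
  N-diagonal edge (b,c); the order is the one generated by P's order and b < u < c.\<close>
definition SN_carrier :: "'a set \<Rightarrow> ('a \<Rightarrow> 'a \<Rightarrow> bool) \<Rightarrow> ('a + ('a \<times> 'a)) set" where
  "SN_carrier V le = Inl ` V \<union> Inr ` Ndiag V le"

fun SN_le :: "('a \<Rightarrow> 'a \<Rightarrow> bool) \<Rightarrow> ('a + ('a \<times> 'a)) \<Rightarrow> ('a + ('a \<times> 'a)) \<Rightarrow> bool" where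
  "SN_le le (Inl p) (Inl q) = le p q"
| "SN_le le (Inl p) (Inr (b, c)) = le p b"
| "SN_le le (Inr (b, c)) (Inl q) = le c q"
| "SN_le le (Inr (b, c)) (Inr (b', c')) = ((b, c) = (b', c') \<or> le c b')"

definition Aset :: "'a set \<Rightarrow> ('a \<Rightarrow> 'a \<Rightarrow> bool) \<Rightarrow> ('a \<times> 'a) set" where
  "Aset V le = {(b, c). (b, c) \<in> Diag V le - Ndiag V le \<and>
     (\<exists>a\<in>V. \<exists>d\<in>V. pless le a c \<and> pless le b d \<and> (a, b) \<in> Inc V le \<and> (c, d) \<in> Inc V le
        \<and> ((a, c) \<in> Ndiag V le \<or> (b, d) \<in> Ndiag V le))}"

end

theory Submission
  imports Defs
begin


lemma poset_refl: "poset V le \<Longrightarrow> x \<in> V \<Longrightarrow> le x x" unfolding poset_def by blast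
lemma poset_antisym: "poset V le \<Longrightarrow> x \<in> V \<Longrightarrow> y \<in> V \<Longrightarrow> le x y \<Longrightarrow> le y x \<Longrightarrow> x = y"
  unfolding poset_def by blast
lemma poset_trans: "poset V le \<Longrightarrow> x \<in> V \<Longrightarrow> y \<in> V \<Longrightarrow> z \<in> V \<Longrightarrow> le x y \<Longrightarrow> le y z \<Longrightarrow> le x z"
  unfolding poset_def by blast

lemma covers_D: "covers V le x y \<Longrightarrow> x \<in> V \<and> y \<in> V \<and> le x y \<and> x \<noteq> y"
  by (simp add: covers_def pless_def)

lemma Ndiag_cov: "(b, c) \<in> Ndiag V le \<Longrightarrow> covers V le b c"
  by (auto simp: Ndiag_def is_N_def)

lemma ex_cover_above:
  assumes P: "poset V le" and fin: "finite V"
  shows "x \<in> V \<Longrightarrow> y \<in> V \<Longrightarrow> pless le x y \<Longrightarrow> \<exists>z\<in>V. covers V le x z \<and> le z y"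
proof (induction "card {z\<in>V. pless le x z \<and> le z y}" arbitrary: y rule: less_induct)
  case less
  show ?case
  proof (cases "covers V le x y")
    case True
    moreover have "le y y" using less.prems(2) poset_refl[OF P] by blast
    ultimately show ?thesis using less.prems(2) by blast
  next
    case False
    have "\<exists>z\<in>V. pless le x z \<and> pless le z y"
      using less.prems False unfolding covers_def by simp
    then obtain z where z: "z \<in> V" "pless le x z" "pless le z y" by blast
    have zy: "le z y" "z \<noteq> y" using z(3) by (auto simp: pless_def)
    have sub1: "{w\<in>V. pless le x w \<and> le w z} \<subseteq> {w\<in>V. pless le x w \<and> le w y}"
    proof
      fix w assume "w \<in> {w\<in>V. pless le x w \<and> le w z}"
      then have w: "w \<in> V" "pless le x w" "le w z" by auto
      have "le w y" using poset_trans[OF P w(1) z(1) less.prems(2) w(3) zy(1)] .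
      then show "w \<in> {w\<in>V. pless le x w \<and> le w y}" using w by simp
    qed
    have "\<not> le y z" using poset_antisym[OF P z(1) less.prems(2) zy(1)] zy(2) by blast
    then have "y \<notin> {w\<in>V. pless le x w \<and> le w z}" by simp
    moreover have "y \<in> {w\<in>V. pless le x w \<and> le w y}"
      using less.prems poset_refl[OF P] by simp
    ultimately have sub: "{w\<in>V. pless le x w \<and> le w z} \<subset> {w\<in>V. pless le x w \<and> le w y}"
      using sub1 by blast
    have "card {w\<in>V. pless le x w \<and> le w z} < card {w\<in>V. pless le x w \<and> le w y}"
    proof -
      have "finite {w\<in>V. pless le x w \<and> le w y}" using fin by simp
      then show ?thesis using psubset_card_mono sub by blast
    qed
    then obtain w where w: "w \<in> V" "covers V le x w" "le w z"
      using less.hyps[OF _ less.prems(1) z(1) z(2)] by blast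
    have "le w y" using poset_trans[OF P w(1) z(1) less.prems(2) w(3) zy(1)] .
    then show ?thesis using w by blast
  qed
qed



lemma covers_dual: "covers V (\<lambda>x y. le y x) x y = covers V le y x"
  unfolding covers_def pless_def by auto
lemma poset_dual: "poset V le \<Longrightarrow> poset V (\<lambda>x y. le y x)"
  unfolding poset_def by (intro conjI; metis)
lemma ex_cover_below:
  assumes P: "poset V le" and fin: "finite V"
  and xy: "x \<in> V" "y \<in> V" "pless le x y"
  shows "\<exists>z\<in>V. covers V le z y \<and> le x z"
proof -
  have "pless (\<lambda>x y. le y x) y x" using xy(3) unfolding pless_def by auto
  then have "\<exists>z\<in>V. covers V (\<lambda>x y. le y x) y z \<and> le x z"
    using ex_cover_above[OF poset_dual[OF P] fin xy(2) xy(1)] by blast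
  then obtain z where "z \<in> V" "covers V (\<lambda>x y. le y x) y z" "le x z" by blast
  then show ?thesis using covers_dual[of V le y z] by blast
qed
lemma nonN_strong:
  assumes P: "poset V le" and fin: "finite V"
    and cov: "covers V le p q" and nN: "(p, q) \<notin> Ndiag V le"
    and x: "x \<in> V" and y: "y \<in> V" and xq: "pless le x q" and py: "pless le p y"
  shows "le x y"
proof -
  have pq: "p \<in> V" "q \<in> V" using cov covers_D by metis+
  obtain x' where x': "x' \<in> V" "covers V le x' q" "le x x'"
    using ex_cover_below[OF P fin x pq(2) xq] by blast
  obtain y' where y': "y' \<in> V" "covers V le p y'" "le y' y"
    using ex_cover_above[OF P fin pq(1) y py] by blast
  show ?thesis
  proof (cases "x' = p \<or> y' = q")
    case True
    then show ?thesis
    proof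
      assume "x' = p"
      then have "le x p" using x' by simp
      moreover have "le p y" using py by (simp add: pless_def)
      ultimately show ?thesis using x y pq P poset_trans by metis
    next
      assume "y' = q"
      then have "le q y" using y' by simp
      moreover have "le x q" using xq by (simp add: pless_def)
      ultimately show ?thesis using x y pq P poset_trans by metis
    qed
  next
    case False
    have "(x', y') \<notin> Inc V le"
    proof
      assume "(x', y') \<in> Inc V le"
      then have "is_N V le x' p q y'" using cov x' y' by (simp add: is_N_def)
      then have "(p, q) \<in> Ndiag V le" unfolding Ndiag_def by blast
      then show False using nN by simp
    qed
    then have "le x' y' \<or> le y' x'" using x' y' by (auto simp: Inc_def)
    moreover have "\<not> le y' x'"
    proof
      assume h: "le y' x'"
      have pv: "p \<in> V" "q \<in> V" using cov covers_D by metis+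
      have "le y' q" using h x' y' pv P poset_trans covers_D by metis
      then have "pless le y' q" using False by (simp add: pless_def)
      moreover have "pless le p y'" using y' by (simp add: covers_def)
      ultimately show False using cov y'(1) unfolding covers_def by blast
    qed
    ultimately have "le x' y'" by blast
    then have "le x y'" using poset_trans[OF P x x'(1) y'(1) x'(3)] by simp
    then show ?thesis using poset_trans[OF P x y'(1) y] y'(3) by simp
  qed
qed



lemma Ndiag_props: "(b, c) \<in> Ndiag V le \<Longrightarrow> b \<in> V \<and> c \<in> V \<and> le b c \<and> b \<noteq> c"
  using Ndiag_cov covers_D by metis

lemma SN_carrier_cases:
  assumes "u \<in> SN_carrier V le"
  obtains p where "u = Inl p" "p \<in> V"
  | b c where "u = Inr (b, c)" "(b, c) \<in> Ndiag V le"
  using assms unfolding SN_carrier_def by auto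

lemma SN_trans:
  assumes P: "poset V le" and u: "u \<in> SN_carrier V le" and v: "v \<in> SN_carrier V le"
    and w: "w \<in> SN_carrier V le" and uv: "SN_le le u v" and vw: "SN_le le v w"
  shows "SN_le le u w"
proof -
  have tr: "\<And>x y z. x \<in> V \<Longrightarrow> y \<in> V \<Longrightarrow> z \<in> V \<Longrightarrow> le x y \<Longrightarrow> le y z \<Longrightarrow> le x z"
    using poset_trans[OF P] by blast
  show ?thesis
    using u v w uv vw
    by (elim SN_carrier_cases; auto dest!: Ndiag_props; metis tr)
qed

lemma SN_poset:
  assumes P: "poset V le"
  shows "poset (SN_carrier V le) (SN_le le)"
proof -
  have r: "SN_le le u u" if "u \<in> SN_carrier V le" for u
    using that by (elim SN_carrier_cases) (auto intro: poset_refl[OF P])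
  have a: "u = v" if "u \<in> SN_carrier V le" "v \<in> SN_carrier V le" "SN_le le u v" "SN_le le v u" for u v
  proof -
    have tr: "\<And>x y z. x \<in> V \<Longrightarrow> y \<in> V \<Longrightarrow> z \<in> V \<Longrightarrow> le x y \<Longrightarrow> le y z \<Longrightarrow> le x z"
      using poset_trans[OF P] by blast
    have an: "\<And>x y. x \<in> V \<Longrightarrow> y \<in> V \<Longrightarrow> le x y \<Longrightarrow> le y x \<Longrightarrow> x = y"
      using poset_antisym[OF P] by blast
    show ?thesis using that
      by (elim SN_carrier_cases; auto dest!: Ndiag_props; metis tr an)
  qed
  show ?thesis unfolding poset_def using r a SN_trans[OF P] by blast
qed

lemma SN_finite: "finite V \<Longrightarrow> finite (SN_carrier V le)"
proof -
  assume f: "finite V"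
  have "Ndiag V le \<subseteq> V \<times> V" using Ndiag_props by fastforce
  then have "finite (Ndiag V le)" using f finite_subset by blast
  then show ?thesis unfolding SN_carrier_def using f by simp
qed



lemma covers_I:
  "x \<in> V \<Longrightarrow> y \<in> V \<Longrightarrow> le x y \<Longrightarrow> x \<noteq> y \<Longrightarrow> (\<And>z. z \<in> V \<Longrightarrow> le x z \<Longrightarrow> le z y \<Longrightarrow> z = x \<or> z = y) \<Longrightarrow> covers V le x y"
  unfolding covers_def pless_def by blast

lemma covers_E:
  "covers V le x y \<Longrightarrow> z \<in> V \<Longrightarrow> le x z \<Longrightarrow> le z y \<Longrightarrow> z = x \<or> z = y"
  unfolding covers_def pless_def by blast

lemma cov_Inl_Inl:
  assumes P: "poset V le"
  shows "covers (SN_carrier V le) (SN_le le) (Inl p) (Inl q) \<longleftrightarrow> (p, q) \<in> Diag V le - Ndiag V le"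
proof
  assume c: "covers (SN_carrier V le) (SN_le le) (Inl p) (Inl q)"
  then have pq: "p \<in> V" "q \<in> V" "le p q" "p \<noteq> q"
    using covers_D[OF c] by (auto simp: SN_carrier_def)
  have "covers V le p q"
  proof (rule covers_I[where le=le, OF pq])
    fix z assume "z \<in> V" "le p z" "le z q"
    then have "Inl z \<in> SN_carrier V le" "SN_le le (Inl p) (Inl z)" "SN_le le (Inl z) (Inl q)"
      by (auto simp: SN_carrier_def)
    from covers_E[OF c this] show "z = p \<or> z = q" by simp
  qed
  moreover have "(p, q) \<notin> Ndiag V le"
  proof
    assume "(p, q) \<in> Ndiag V le"
    then have "Inr (p, q) \<in> SN_carrier V le" "SN_le le (Inl p) (Inr (p, q))" "SN_le le (Inr (p, q)) (Inl q)"
      using pq poset_refl[OF P] by (auto simp: SN_carrier_def)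
    from covers_E[OF c this] show False by simp
  qed
  ultimately show "(p, q) \<in> Diag V le - Ndiag V le" by (simp add: Diag_def)
next
  assume a: "(p, q) \<in> Diag V le - Ndiag V le"
  then have c: "covers V le p q" and nN: "(p, q) \<notin> Ndiag V le" by (auto simp: Diag_def)
  note pq = covers_D[OF c]
  show "covers (SN_carrier V le) (SN_le le) (Inl p) (Inl q)"
  proof (rule covers_I)
    show "Inl p \<in> SN_carrier V le" "Inl q \<in> SN_carrier V le" using pq by (auto simp: SN_carrier_def)
    show "SN_le le (Inl p) (Inl q)" "Inl p \<noteq> Inl q" using pq by auto
    fix z assume z: "z \<in> SN_carrier V le" "SN_le le (Inl p) z" "SN_le le z (Inl q)"
    from z(1) show "z = Inl p \<or> z = Inl q"
    proof (cases rule: SN_carrier_cases)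
      case (1 r)
      then show ?thesis using covers_E[OF c, of r] z by auto
    next
      case (2 b c')
      note bc = Ndiag_props[OF 2(2)]
      have pb: "le p b" and cq: "le c' q" using z 2 by auto
      have bq: "le b q" using poset_trans[OF P _ _ _ bc[THEN conjunct2, THEN conjunct2, THEN conjunct1] cq] bc pq by blast
      have pc: "le p c'" using poset_trans[OF P _ _ _ pb] bc pq by blast
      have "b = p \<or> b = q" using covers_E[OF c _ pb bq] bc by blast
      moreover have "c' = p \<or> c' = q" using covers_E[OF c _ pc cq] bc by blast
      moreover have "b \<noteq> q"
      proof
        assume "b = q"
        then have "le c' b" using cq by simp
        then show False using poset_antisym[OF P] bc by blast
      qed
      moreover have "c' \<noteq> p"
      proof
        assume "c' = p"
        then have "le c' b" using pb by simp
        then show False using poset_antisym[OF P] bc by blast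
      qed
      ultimately have "b = p" "c' = q" by auto
      then show ?thesis using nN 2 by simp
    qed
  qed
qed


lemma G_up:
  assumes P: "poset V le" and w: "w \<in> SN_carrier V le"
    and "SN_le le (Inr (x, y)) w" and "Inr (x, y) \<noteq> w"
  shows "SN_le le (Inl y) w"
  using w assms(3,4) by (cases rule: SN_carrier_cases) auto

lemma G_down:
  assumes P: "poset V le" and w: "w \<in> SN_carrier V le"
    and "SN_le le w (Inr (x, y))" and "w \<noteq> Inr (x, y)"
  shows "SN_le le w (Inl x)"
  using w assms(3,4) by (cases rule: SN_carrier_cases) auto

lemma U2_down:
  assumes P: "poset V le" and c: "covers (SN_carrier V le) (SN_le le) u (Inr (x, y))"
  shows "u = Inl x"
proof (rule ccontr)
  assume ne: "u \<noteq> Inl x"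
  note cd = covers_D[OF c]
  have xy: "(x, y) \<in> Ndiag V le" using cd by (auto simp: SN_carrier_def)
  note xyp = Ndiag_props[OF xy]
  have "SN_le le u (Inl x)" using G_down[OF P] cd by blast
  moreover have "Inl x \<in> SN_carrier V le" using xyp by (simp add: SN_carrier_def)
  moreover have "SN_le le (Inl x) (Inr (x, y))" using xyp poset_refl[OF P] by simp
  ultimately have "Inl x = u \<or> Inl x = Inr (x, y)" using covers_E[OF c] by blast
  then show False using ne by auto
qed

lemma U2_up:
  assumes P: "poset V le" and c: "covers (SN_carrier V le) (SN_le le) (Inr (x, y)) u"
  shows "u = Inl y"
proof (rule ccontr)
  assume ne: "u \<noteq> Inl y"
  note cd = covers_D[OF c]
  have xy: "(x, y) \<in> Ndiag V le" using cd by (auto simp: SN_carrier_def)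
  note xyp = Ndiag_props[OF xy]
  have "SN_le le (Inl y) u" using G_up[OF P] cd by blast
  moreover have "Inl y \<in> SN_carrier V le" using xyp by (simp add: SN_carrier_def)
  moreover have "SN_le le (Inr (x, y)) (Inl y)" using xyp poset_refl[OF P] by simp
  ultimately have "Inl y = Inr (x, y) \<or> Inl y = u" using covers_E[OF c] by blast
  then show False using ne by auto
qed

lemma U3_down:
  assumes P: "poset V le" and xy: "(x, y) \<in> Ndiag V le"
  shows "covers (SN_carrier V le) (SN_le le) (Inl x) (Inr (x, y))"
proof (rule covers_I)
  note xyp = Ndiag_props[OF xy]
  show "Inl x \<in> SN_carrier V le" "Inr (x, y) \<in> SN_carrier V le" using xy xyp by (auto simp: SN_carrier_def)
  show "SN_le le (Inl x) (Inr (x, y))" using xyp poset_refl[OF P] by simp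
  show "Inl x \<noteq> Inr (x, y)" by simp
  fix z assume z: "z \<in> SN_carrier V le" "SN_le le (Inl x) z" "SN_le le z (Inr (x, y))"
  from z(1) show "z = Inl x \<or> z = Inr (x, y)"
  proof (cases rule: SN_carrier_cases)
    case (1 r)
    then show ?thesis using z poset_antisym[OF P, of x r] xyp by auto
  next
    case (2 b c)
    note bc = Ndiag_props[OF 2(2)]
    show ?thesis
    proof (cases "(b, c) = (x, y)")
      case False
      then have "le x b" "le c x" using z 2 by auto
      then have "le c b" using poset_trans[OF P, of c x b] bc xyp by blast
      then show ?thesis using poset_antisym[OF P, of b c] bc by blast
    qed (use 2 in auto)
  qed
qed

lemma U3_up:
  assumes P: "poset V le" and xy: "(x, y) \<in> Ndiag V le"
  shows "covers (SN_carrier V le) (SN_le le) (Inr (x, y)) (Inl y)"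
proof (rule covers_I)
  note xyp = Ndiag_props[OF xy]
  show "Inl y \<in> SN_carrier V le" "Inr (x, y) \<in> SN_carrier V le" using xy xyp by (auto simp: SN_carrier_def)
  show "SN_le le (Inr (x, y)) (Inl y)" using xyp poset_refl[OF P] by simp
  show "Inr (x, y) \<noteq> Inl y" by simp
  fix z assume z: "z \<in> SN_carrier V le" "SN_le le (Inr (x, y)) z" "SN_le le z (Inl y)"
  from z(1) show "z = Inr (x, y) \<or> z = Inl y"
  proof (cases rule: SN_carrier_cases)
    case (1 r)
    then show ?thesis using z poset_antisym[OF P, of y r] xyp by auto
  next
    case (2 b c)
    note bc = Ndiag_props[OF 2(2)]
    show ?thesis
    proof (cases "(x, y) = (b, c)")
      case False
      then have "le y b" "le c y" using z 2 by auto
      then have "le c b" using poset_trans[OF P, of c y b] bc xyp by blast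
      then show ?thesis using poset_antisym[OF P, of b c] bc by blast
    qed (use 2 in auto)
  qed
qed

lemma Q3:
  assumes P: "poset V le" and N: "is_N (SN_carrier V le) (SN_le le) a b c d"
  shows "\<exists>b0 c0. b = Inl b0 \<and> c = Inl c0"
proof -
  have bc: "covers (SN_carrier V le) (SN_le le) b c" and ac: "covers (SN_carrier V le) (SN_le le) a c"
    and bd: "covers (SN_carrier V le) (SN_le le) b d" and ad: "(a, d) \<in> Inc (SN_carrier V le) (SN_le le)"
    using N by (auto simp: is_N_def)
  have "\<nexists>x y. b = Inr (x, y)"
  proof
    assume "\<exists>x y. b = Inr (x, y)"
    then obtain x y where b: "b = Inr (x, y)" by blast
    have "c = d" using U2_up[OF P, of x y c] U2_up[OF P, of x y d] bc bd b by simp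
    then show False using ad covers_D[OF ac] by (auto simp: Inc_def)
  qed
  moreover have "\<nexists>x y. c = Inr (x, y)"
  proof
    assume "\<exists>x y. c = Inr (x, y)"
    then obtain x y where c: "c = Inr (x, y)" by blast
    have "a = b" using U2_down[OF P, of a x y] U2_down[OF P, of b x y] ac bc c by simp
    then show False using ad covers_D[OF bd] by (auto simp: Inc_def)
  qed
  moreover have "b \<in> SN_carrier V le" "c \<in> SN_carrier V le" using covers_D[OF bc] by auto
  ultimately show ?thesis unfolding SN_carrier_def by auto
qed



lemma isN_Ndiag: "is_N V le a b c d \<Longrightarrow> (b, c) \<in> Ndiag V le"
  unfolding Ndiag_def by blast

theorem lemma4:
  fixes V :: "'a set" and le :: "'a \<Rightarrow> 'a \<Rightarrow> bool"
  assumes "finite V" and "poset V le"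
  shows "Aset (SN_carrier V le) (SN_le le) = {}"
proof (rule ccontr)
  let ?Q = "SN_carrier V le" and ?R = "SN_le le"
  note fin = assms(1) and P = assms(2)
  have QP: "poset ?Q ?R" using SN_poset[OF P] .
  have finQ: "finite ?Q" using SN_finite[OF fin] .
  have trQ: "\<And>x y z. x \<in> ?Q \<Longrightarrow> y \<in> ?Q \<Longrightarrow> z \<in> ?Q \<Longrightarrow> ?R x y \<Longrightarrow> ?R y z \<Longrightarrow> ?R x z"
    using poset_trans[OF QP] by blast
  have trP: "\<And>x y z. x \<in> V \<Longrightarrow> y \<in> V \<Longrightarrow> z \<in> V \<Longrightarrow> le x y \<Longrightarrow> le y z \<Longrightarrow> le x z"
    using poset_trans[OF P] by blast
  have anP: "\<And>x y. x \<in> V \<Longrightarrow> y \<in> V \<Longrightarrow> le x y \<Longrightarrow> le y x \<Longrightarrow> x = y"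
    using poset_antisym[OF P] by blast
  assume "Aset ?Q ?R \<noteq> {}"
  then obtain b c a d where bcD: "(b, c) \<in> Diag ?Q ?R" and nNQ: "(b, c) \<notin> Ndiag ?Q ?R"
    and aQ: "a \<in> ?Q" and dQ: "d \<in> ?Q" and ac: "pless ?R a c" and bd: "pless ?R b d"
    and ab: "(a, b) \<in> Inc ?Q ?R" and cd: "(c, d) \<in> Inc ?Q ?R"
    and disj: "(a, c) \<in> Ndiag ?Q ?R \<or> (b, d) \<in> Ndiag ?Q ?R"
    unfolding Aset_def by blast
  have bc: "covers ?Q ?R b c" using bcD by (simp add: Diag_def)
  have noN: "\<not> is_N ?Q ?R x b c y" for x y using nNQ isN_Ndiag by metis
  have bQ: "b \<in> ?Q" and cQ: "c \<in> ?Q" using covers_D[OF bc] by auto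
  have "\<exists>b0. b = Inl b0"
  proof (rule ccontr)
    assume "\<nexists>b0. b = Inl b0"
    then obtain x y where b: "b = Inr (x, y)" using bQ by (auto simp: SN_carrier_def)
    have "c = Inl y" using U2_up[OF P] bc b by blast
    then have "?R c d" using G_up[OF P dQ, of x y] bd b by (simp add: pless_def)
    then show False using cd by (simp add: Inc_def)
  qed
  then obtain b0 where b: "b = Inl b0" by blast
  have "\<exists>c0. c = Inl c0"
  proof (rule ccontr)
    assume "\<nexists>c0. c = Inl c0"
    then obtain x y where c: "c = Inr (x, y)" using cQ by (auto simp: SN_carrier_def)
    have "b = Inl x" using U2_down[OF P] bc c by blast
    then have "?R a b" using G_down[OF P aQ, of x y] ac c by (simp add: pless_def)
    then show False using ab by (simp add: Inc_def)
  qed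
  then obtain c0 where c: "c = Inl c0" by blast
  have b0c0: "(b0, c0) \<in> Diag V le - Ndiag V le" using bc b c cov_Inl_Inl[OF P] by simp
  then have covP: "covers V le b0 c0" and nNP: "(b0, c0) \<notin> Ndiag V le" by (auto simp: Diag_def)
  note b0c0V = covers_D[OF covP]
  from disj show False
  proof
    assume "(a, c) \<in> Ndiag ?Q ?R"
    then obtain a' d' where N: "is_N ?Q ?R a' a c d'" unfolding Ndiag_def by blast
    then obtain a0 where a: "a = Inl a0" using Q3[OF P] by blast
    have acQ: "covers ?Q ?R a c" and a'cQ: "covers ?Q ?R a' c" and ad'Q: "covers ?Q ?R a d'"
      and a'd': "(a', d') \<in> Inc ?Q ?R" using N by (auto simp: is_N_def)
    have a0c0: "(a0, c0) \<in> Diag V le - Ndiag V le" using acQ a c cov_Inl_Inl[OF P] by simp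
    then have covA: "covers V le a0 c0" and nNA: "(a0, c0) \<notin> Ndiag V le" by (auto simp: Diag_def)
    note a0c0V = covers_D[OF covA]
    have a0b0: "\<not> le a0 b0" "\<not> le b0 a0" using ab a b by (auto simp: Inc_def)
    obtain ds where dsQ: "ds \<in> ?Q" and bds: "covers ?Q ?R b ds" and dsd: "?R ds d"
      using ex_cover_above[OF QP finQ bQ dQ bd] by blast
    have a'Q: "a' \<in> ?Q" using covers_D[OF a'cQ] by simp
    from a'Q show False
    proof (cases rule: SN_carrier_cases)
      case (2 x y)
      have "c = Inl y" using U2_up[OF P] a'cQ 2 by blast
      have "is_N ?Q ?R a' b c ds"
        unfolding is_N_def
      proof (intro conjI)
        show "covers ?Q ?R b c" "covers ?Q ?R a' c" "covers ?Q ?R b ds" by fact+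
        have ne: "a' \<noteq> ds"
        proof
          assume "a' = ds"
          then have "pless ?R b a'" "pless ?R a' c" using bds a'cQ by (auto simp: covers_def)
          then show False using bc a'Q by (auto simp: covers_def)
        qed
        have n1: "\<not> ?R a' ds"
        proof
          assume "?R a' ds"
          then have "?R (Inl y) ds" using G_up[OF P dsQ, of x y] 2 ne by simp
          then have "?R c d" using trQ[OF cQ dsQ dQ] dsd \<open>c = Inl y\<close> by simp
          then show False using cd by (simp add: Inc_def)
        qed
        have n2: "\<not> ?R ds a'"
        proof
          assume "?R ds a'"
          then have "?R ds c" using trQ[OF dsQ a'Q cQ] covers_D[OF a'cQ] by simp
          moreover have "ds \<noteq> c" using dsd cd by (auto simp: Inc_def)
          ultimately have "pless ?R ds c" by (simp add: pless_def)
          moreover have "pless ?R b ds" using bds by (simp add: covers_def)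
          ultimately show False using bc dsQ by (auto simp: covers_def)
        qed
        show "(a', ds) \<in> Inc ?Q ?R" using n1 n2 a'Q dsQ by (simp add: Inc_def)
      qed
      then show False using noN by blast
    next
      case (1 x)
      have d'Q: "d' \<in> ?Q" using covers_D[OF ad'Q] by simp
      from d'Q show False
      proof (cases rule: SN_carrier_cases)
        case (1 y)
        have "covers V le x c0" using a'cQ \<open>a' = Inl x\<close> c cov_Inl_Inl[OF P] by (simp add: Diag_def)
        moreover have "covers V le a0 y" using ad'Q \<open>d' = Inl y\<close> a cov_Inl_Inl[OF P] by (simp add: Diag_def)
        moreover have "(x, y) \<in> Inc V le" using a'd' \<open>a' = Inl x\<close> \<open>d' = Inl y\<close>
          by (auto simp: Inc_def SN_carrier_def)
        ultimately have "is_N V le x a0 c0 y" using covA by (simp add: is_N_def)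
        then show False using nNA isN_Ndiag by metis
      next
        case (2 x1 y)
        have "a = Inl x1" using U2_down[OF P] ad'Q 2 by blast
        then have ay: "(a0, y) \<in> Ndiag V le" using 2 a by simp
        have covAY: "covers V le a0 y" using Ndiag_cov[OF ay] .
        note a0yV = covers_D[OF covAY]
        have "le b0 y"
          using nonN_strong[OF P fin covA nNA] b0c0V a0yV by (simp add: pless_def)
        moreover have "b0 \<noteq> y" using a0b0 a0yV by auto
        ultimately obtain f where fV: "f \<in> V" and covBF: "covers V le b0 f" and fy: "le f y"
          using ex_cover_above[OF P fin, of b0 y] b0c0V a0yV by (auto simp: pless_def)
        note fV' = covers_D[OF covBF]
        have "le a0 f"
          using nonN_strong[OF P fin covP nNP] a0c0V fV' by (simp add: pless_def)
        then have "f = a0 \<or> f = y" using covers_E[OF covAY fV _ fy] by blast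
        then have fy': "f = y" using fV' a0b0 by auto
        have covBY: "covers V le b0 y" using covBF fy' by simp
        have nNBY: "(b0, y) \<notin> Ndiag V le"
        proof
          assume hby: "(b0, y) \<in> Ndiag V le"
          have "is_N ?Q ?R a b c (Inr (b0, y))"
            unfolding is_N_def
          proof (intro conjI)
            show "covers ?Q ?R b c" "covers ?Q ?R a c" by fact+
            show "covers ?Q ?R b (Inr (b0, y))" using U3_down[OF P hby] b by simp
            have "y \<noteq> a0" using a0yV by auto
            then have "\<not> le y a0" using anP a0yV by blast
            then show "(a, Inr (b0, y)) \<in> Inc ?Q ?R"
              using a0b0 a aQ hby by (auto simp: Inc_def SN_carrier_def)
          qed
          then show False using noN by blast
        qed
        obtain w z where N2: "is_N V le w a0 y z" using ay unfolding Ndiag_def by blast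
        have covWY: "covers V le w y" and covAZ: "covers V le a0 z" and wz: "(w, z) \<in> Inc V le"
          using N2 by (auto simp: is_N_def)
        note wyV = covers_D[OF covWY] and azV = covers_D[OF covAZ]
        have wc: "le w c0"
          using nonN_strong[OF P fin covBY nNBY] wyV b0c0V by (simp add: pless_def)
        have "w \<noteq> c0"
        proof
          assume "w = c0"
          then have "c0 = b0 \<or> c0 = y" using covers_E[OF covBY, of c0] b0c0V wyV by auto
          then show False using b0c0V wyV \<open>w = c0\<close> by auto
        qed
        then have "le w z"
          using nonN_strong[OF P fin covA nNA] wc wyV azV by (simp add: pless_def)
        then show False using wz by (simp add: Inc_def)
      qed
    qed
  next
    assume "(b, d) \<in> Ndiag ?Q ?R"
    then obtain x' z' where N: "is_N ?Q ?R x' b d z'" unfolding Ndiag_def by blast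
    then obtain d0 where d: "d = Inl d0" using Q3[OF P] by blast
    have bdQ: "covers ?Q ?R b d" and x'dQ: "covers ?Q ?R x' d" and bz'Q: "covers ?Q ?R b z'"
      and x'z': "(x', z') \<in> Inc ?Q ?R" using N by (auto simp: is_N_def)
    have b0d0: "(b0, d0) \<in> Diag V le - Ndiag V le" using bdQ b d cov_Inl_Inl[OF P] by simp
    then have covD: "covers V le b0 d0" and nND: "(b0, d0) \<notin> Ndiag V le" by (auto simp: Diag_def)
    note b0d0V = covers_D[OF covD]
    have c0d0: "\<not> le c0 d0" "\<not> le d0 c0" using cd c d by (auto simp: Inc_def)
    obtain as where asQ: "as \<in> ?Q" and asc: "covers ?Q ?R as c" and aas: "?R a as"
      using ex_cover_below[OF QP finQ aQ cQ ac] by blast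
    have z'Q: "z' \<in> ?Q" using covers_D[OF bz'Q] by simp
    from z'Q show False
    proof (cases rule: SN_carrier_cases)
      case (2 x y)
      have "b = Inl x" using U2_down[OF P] bz'Q 2 by blast
      have "is_N ?Q ?R as b c z'"
        unfolding is_N_def
      proof (intro conjI)
        show "covers ?Q ?R b c" "covers ?Q ?R as c" "covers ?Q ?R b z'" by fact+
        have ne: "as \<noteq> z'"
        proof
          assume "as = z'"
          then have "pless ?R b as" "pless ?R as c" using bz'Q asc by (auto simp: covers_def)
          then show False using bc asQ by (auto simp: covers_def)
        qed
        have n1: "\<not> ?R as z'"
        proof
          assume "?R as z'"
          then have "?R as (Inl x)" using G_down[OF P asQ, of x y] 2 ne by simp
          then have "?R a b" using trQ[OF aQ asQ bQ] aas \<open>b = Inl x\<close> by simp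
          then show False using ab by (simp add: Inc_def)
        qed
        have n2: "\<not> ?R z' as"
        proof
          assume "?R z' as"
          then have "?R z' c" using trQ[OF z'Q asQ cQ] covers_D[OF asc] by simp
          moreover have "z' \<noteq> c" using 2 c by simp
          ultimately have "pless ?R z' c" by (simp add: pless_def)
          moreover have "pless ?R b z'" using bz'Q by (simp add: covers_def)
          ultimately show False using bc z'Q by (auto simp: covers_def)
        qed
        show "(as, z') \<in> Inc ?Q ?R" using n1 n2 asQ z'Q by (simp add: Inc_def)
      qed
      then show False using noN by blast
    next
      case (1 z)
      have x'Q: "x' \<in> ?Q" using covers_D[OF x'dQ] by simp
      from x'Q show False
      proof (cases rule: SN_carrier_cases)
        case (1 x)
        have "covers V le x d0" using x'dQ \<open>x' = Inl x\<close> d cov_Inl_Inl[OF P] by (simp add: Diag_def)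
        moreover have "covers V le b0 z" using bz'Q \<open>z' = Inl z\<close> b cov_Inl_Inl[OF P] by (simp add: Diag_def)
        moreover have "(x, z) \<in> Inc V le" using x'z' \<open>x' = Inl x\<close> \<open>z' = Inl z\<close>
          by (auto simp: Inc_def SN_carrier_def)
        ultimately have "is_N V le x b0 d0 z" using covD by (simp add: is_N_def)
        then show False using nND isN_Ndiag by metis
      next
        case (2 x y1)
        have "d = Inl y1" using U2_up[OF P] x'dQ 2 by blast
        then have xd: "(x, d0) \<in> Ndiag V le" using 2 d by simp
        have covXD: "covers V le x d0" using Ndiag_cov[OF xd] .
        note xdV = covers_D[OF covXD]
        have xc: "le x c0"
          using nonN_strong[OF P fin covD nND] xdV b0c0V by (simp add: pless_def)
        moreover have "x \<noteq> c0" using c0d0 xdV by auto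
        ultimately obtain g where gV: "g \<in> V" and covGC: "covers V le g c0" and xg: "le x g"
          using ex_cover_below[OF P fin, of x c0] b0c0V xdV by (auto simp: pless_def)
        note gV' = covers_D[OF covGC]
        have "le g d0"
          using nonN_strong[OF P fin covP nNP] b0d0V gV' by (simp add: pless_def)
        then have "g = x \<or> g = d0" using covers_E[OF covXD gV xg] by blast
        then have gx: "g = x" using gV' c0d0 by auto
        have covXC: "covers V le x c0" using covGC gx by simp
        have nNXC: "(x, c0) \<notin> Ndiag V le"
        proof
          assume hxc: "(x, c0) \<in> Ndiag V le"
          have "is_N ?Q ?R (Inr (x, c0)) b c d"
            unfolding is_N_def
          proof (intro conjI)
            show "covers ?Q ?R b c" "covers ?Q ?R b d" by fact+
            show "covers ?Q ?R (Inr (x, c0)) c" using U3_up[OF P hxc] c by simp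
            have "d0 \<noteq> x" using xdV by auto
            then have "\<not> le d0 x" using anP xdV by blast
            then show "(Inr (x, c0), d) \<in> Inc ?Q ?R"
              using c0d0 d dQ hxc by (auto simp: Inc_def SN_carrier_def)
          qed
          then show False using noN by blast
        qed
        obtain w v where N2: "is_N V le w x d0 v" using xd unfolding Ndiag_def by blast
        have covWD: "covers V le w d0" and covXV: "covers V le x v" and wv: "(w, v) \<in> Inc V le"
          using N2 by (auto simp: is_N_def)
        note wdV = covers_D[OF covWD] and xvV = covers_D[OF covXV]
        have bv: "le b0 v"
          using nonN_strong[OF P fin covXC nNXC] b0c0V xvV by (simp add: pless_def)
        have "b0 \<noteq> v"
        proof
          assume "b0 = v"
          then have "b0 = x \<or> b0 = d0" using covers_E[OF covXD, of b0] b0d0V xvV by auto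
          then show False using b0d0V xvV \<open>b0 = v\<close> by auto
        qed
        then have "le w v"
          using nonN_strong[OF P fin covD nND] bv wdV xvV by (simp add: pless_def)
        then show False using wv by (simp add: Inc_def)
      qed
    qed
  qed
qed

end
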